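(* Let $\bar\gamma_{\mathrm{R}},\bar\gamma_{\mathrm{D}},\bar\gamma_{\mathrm{E}}>0$ and $\mathcal{R}>0$. Let $h_{\mathrm{S},\mathrm{R}},h_{\mathrm{R},\mathrm{D}},h_{\mathrm{S},\mathrm{E}},h_{\mathrm{R},\mathrm{E}}$ be independent $\mathcal{CN}(0,1)$ random variables. Define $$\mathcal{R}^{3}_{\mathrm{S}\to\mathrm{R}}=\log_2\frac{1+\bar\gamma_{\mathrm{R}}|h_{\mathrm{S},\mathrm{R}}|^2}{1+\bar\gamma_{\mathrm{E}}|h_{\mathrm{S},\mathrm{E}}|^2},\qquad \mathcal{R}^{3}_{\mathrm{R}\to\mathrm{D}}=\log_2\frac{1+\bar\gamma_{\mathrm{D}}|h_{\mathrm{R},\mathrm{D}}|^2}{1+\bar\gamma_{\mathrm{E}}|h_{\mathrm{R},\mathrm{E}}|^2},$$ $\mathcal{R}_3=\max\{\min\{\mathcal{R}^{3}_{\mathrm{S}\to\mathrm{R}},\mathcal{R}^{3}_{\mathrm{R}\to\mathrm{D}}\},0\}$ and $\mathcal{P}_3=\Pr(\mathcal{R}_3<\mathcal{R})$. Then $$\mathcal{P}_3=1-\mathrm{e}^{-\frac{2^{\mathcal{R}}-1}{\bar\gamma_{\mathrm{D}}}-\frac{2^{\mathcal{R}}-1}{\bar\gamma_{\mathrm{R}}}}\cdot\frac{1}{1+\frac{2^{\mathcal{R}}}{\bar\gamma_{\mathrm{D}}}\bar\gamma_{\mathrm{E}}}\cdot\frac{1}{1+\frac{2^{\mathcal{R}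}}{\bar\gamma_{\mathrm{R}}}\bar\gamma_{\mathrm{E}}}.$$
   Context: This models a decode-and-forward relay system (source S, relay R, destination D, eavesdropper E) where the eavesdropper overhears both the source's and the relay's transmissions. $\mathcal{CN}(0,1)$ denotes a circularly symmetric complex Gaussian random variable with zero mean and unit variance (Rayleigh fading). $\bar\gamma$'s are average SNRs, $\mathcal{R}_3$ the secrecy capacity and $\mathcal{P}_3$ the secrecy outage probability. *)

theory Defs
  imports "HOL-Probability.Probability"
begin

definition CN01_density :: "complex \<Rightarrow> ennreal" where
  "CN01_density z = ennreal (exp (- (cmod z)\<^sup>2) / pi)"

definition is_CN01 :: "'a measure \<Rightarrow> ('a \<Rightarrow> complex) \<Rightarrow> bool" where
  "is_CN01 M X \<longleftrightarrow> distributed M lborel X CN01_density"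

definition hop_rate :: "real \<Rightarrow> real \<Rightarrow> complex \<Rightarrow> complex \<Rightarrow> real" where
  "hop_rate gM gE hM hE = log 2 ((1 + gM * (cmod hM)\<^sup>2) / (1 + gE * (cmod hE)\<^sup>2))"

definition secrecy_capacity3 ::
  "real \<Rightarrow> real \<Rightarrow> real \<Rightarrow> complex \<Rightarrow> complex \<Rightarrow> complex \<Rightarrow> complex \<Rightarrow> real" where
  "secrecy_capacity3 gR gD gE hSR hRD hSE hRE =
     max (min (hop_rate gR gE hSR hSE) (hop_rate gD gE hRD hRE)) 0"

end

theory Submission
  imports Defs
begin

lemma cball_sq: "t \<ge> 0 \<Longrightarrow> {z::complex. (cmod z)\<^sup>2 \<le> t} = cball 0 (sqrt t)"
proof -
  have "cmod z \<le> sqrt t \<longleftrightarrow> (cmod z)\<^sup>2 \<le> t" for z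
  proof -
    have "cmod z \<le> sqrt t \<longleftrightarrow> sqrt ((cmod z)\<^sup>2) \<le> sqrt t" by simp
    then show ?thesis using real_sqrt_le_iff by blast
  qed
  then show ?thesis by (simp add: set_eq_iff mem_cball_0)
qed

lemma emeasure_sq_le:
  "emeasure (lborel::complex measure) {z. (cmod z)\<^sup>2 \<le> t} = ennreal (pi * max t 0)"
proof (cases "t \<ge> 0")
  case True
  have "emeasure (lborel::complex measure) (cball 0 (sqrt t)) = ennreal (unit_ball_vol 2 * sqrt t ^ 2)"
    using emeasure_cball[of "sqrt t" "0::complex"] True by simp
  also have "unit_ball_vol 2 = pi" using eval_unit_ball_vol(1)[of Num.One] by simp
  finally show ?thesis using True cball_sq[OF True] by simp
next
  case False
  then have "{z::complex. (cmod z)\<^sup>2 \<le> t} = {}" by (auto simp: not_le) (smt (verit) zero_le_power2)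
  then show ?thesis using False by simp
qed

lemma radial_distr:
  "distr (lborel::complex measure) borel (\<lambda>z. (cmod z)\<^sup>2) = density lborel (\<lambda>s. ennreal pi * indicator {0..} s)"
proof (rule measure_eqI_generator_eq[where \<Omega>=UNIV and E="range (\<lambda>a. {..a::real})" and A="\<lambda>i. {..real i}"])
  show "Int_stable (range (\<lambda>a. {..a::real}))"
    by (auto simp: Int_stable_def intro!: image_eqI[of _ _ "min _ _"])
  show "range atMost \<subseteq> Pow (UNIV::real set)" by auto
  show "sets (distr (lborel::complex measure) borel (\<lambda>z. (cmod z)\<^sup>2)) = sigma_sets UNIV (range atMost)"
    by (simp add: borel_eq_atMost)
  show "sets (density lborel (\<lambda>s. ennreal pi * indicator {0..} s)) = sigma_sets UNIV (range (atMost::real \<Rightarrow> _))"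
    by (simp add: borel_eq_atMost)
  show "range (\<lambda>i. {..real i}) \<subseteq> range atMost" by auto
  show "(\<Union>i. {..real i}) = UNIV" by (auto intro: real_arch_simple)
  have eq: "emeasure (distr (lborel::complex measure) borel (\<lambda>z. (cmod z)\<^sup>2)) {..t} = ennreal (pi * max t 0)
     \<and> emeasure (density lborel (\<lambda>s. ennreal pi * indicator {0..} s)) {..t} = ennreal (pi * max t 0)" for t
  proof
    show "emeasure (distr (lborel::complex measure) borel (\<lambda>z. (cmod z)\<^sup>2)) {..t} = ennreal (pi * max t 0)"
      by (subst emeasure_distr) (auto simp: emeasure_sq_le[symmetric] intro!: arg_cong[where f="emeasure lborel"])
    have "emeasure (density lborel (\<lambda>s. ennreal pi * indicator {0..} s)) {..t} =
       (\<integral>\<^sup>+s. ennreal pi * indicator {0..t} s \<partial>lborel)"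
      by (subst emeasure_density) (auto intro!: nn_integral_cong split: split_indicator)
    also have "\<dots> = ennreal (pi * max t 0)"
      by (subst nn_integral_cmult_indicator) (auto simp: ennreal_mult' emeasure_lborel_Icc_eq max_def)
    finally show "emeasure (density lborel (\<lambda>s. ennreal pi * indicator {0..} s)) {..t} = ennreal (pi * max t 0)" .
  qed
  show "emeasure (distr (lborel::complex measure) borel (\<lambda>z. (cmod z)\<^sup>2)) X = emeasure (density lborel (\<lambda>s. ennreal pi * indicator {0..} s)) X"
    if "X \<in> range atMost" for X using that eq by auto
  show "emeasure (distr (lborel::complex measure) borel (\<lambda>z. (cmod z)\<^sup>2)) {..real i} \<noteq> \<infinity>" for i
    using eq[of "real i"] by simp
qed

lemma radial:
  assumes [measurable]: "g \<in> borel_measurable borel"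
  shows "(\<integral>\<^sup>+z. g ((cmod z)\<^sup>2) \<partial>(lborel::complex measure)) = (\<integral>\<^sup>+s. ennreal pi * indicator {0..} s * g s \<partial>lborel)"
proof -
  have "(\<integral>\<^sup>+z. g ((cmod z)\<^sup>2) \<partial>(lborel::complex measure)) = (\<integral>\<^sup>+s. g s \<partial>distr (lborel::complex measure) borel (\<lambda>z. (cmod z)\<^sup>2))"
    by (subst nn_integral_distr) auto
  also have "\<dots> = (\<integral>\<^sup>+s. ennreal pi * indicator {0..} s * g s \<partial>lborel)"
    unfolding radial_distr by (subst nn_integral_density) auto
  finally show ?thesis .
qed

lemma exp_integral:
  fixes c C t :: real
  assumes "c > 0" "C \<ge> 0"
  shows "(\<integral>\<^sup>+s. ennreal (C * exp (- c * s)) * indicator {t..} s \<partial>lborel) = ennreal (C * exp (- c * t) / c)"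
proof -
  have "(\<integral>\<^sup>+s. ennreal (C * exp (- c * s)) * indicator {t..} s \<partial>lborel) = ennreal (0 - (- C * exp (- c * t) / c))"
  proof (rule nn_integral_FTC_atLeast)
    show "(\<lambda>s. C * exp (- c * s)) \<in> borel_measurable borel" by measurable
    show "DERIV (\<lambda>s. - C * exp (- c * s) / c) x :> C * exp (- c * x)" for x
      using assms by (auto intro!: derivative_eq_intros simp: field_simps)
    show "0 \<le> C * exp (- c * x)" for x using assms by simp
    show "((\<lambda>s. - C * exp (- c * s) / c) \<longlongrightarrow> 0) at_top"
    proof -
      have "LIM s at_top. c * s :> at_top"
        by (rule filterlim_tendsto_pos_mult_at_top[OF tendsto_const \<open>c > 0\<close> filterlim_ident])
      then have "LIM s at_top. - (c * s) :> at_bot" by (simp add: filterlim_uminus_at_top)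
      then have "((\<lambda>s. exp (- (c * s))) \<longlongrightarrow> 0) at_top" by (rule filterlim_compose[OF exp_at_bot])
      then have "((\<lambda>s. (- C / c) * exp (- (c * s))) \<longlongrightarrow> 0) at_top" by (rule tendsto_mult_right_zero)
      then show ?thesis by simp
    qed
  qed
  then show ?thesis by simp
qed

lemma CN01_meas[measurable]: "CN01_density \<in> borel_measurable borel"
  unfolding CN01_density_def by measurable

lemma key:
  fixes M :: "'a measure" and X Y :: "'a \<Rightarrow> complex" and a e q :: real
  assumes P: "prob_space M" and X: "is_CN01 M X" and Y: "is_CN01 M Y"
    and ind: "prob_space.indep_var M borel Y borel X"
    and a: "a > 0" and e: "e \<ge> 0" and q: "q \<ge> 1"
  shows "emeasure M {\<omega> \<in> space M. q - 1 + q*e*(cmod (Y \<omega>))\<^sup>2 \<le> a*(cmod (X \<omega>))\<^sup>2}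
       = ennreal (exp (-(q-1)/a) / (1 + q*e/a))"
proof -
  interpret prob_space M by (rule P)
  define D where "D = density (lborel::complex measure) CN01_density"
  have Xd: "distributed M lborel X CN01_density" and Yd: "distributed M lborel Y CN01_density"
    using X Y by (auto simp: is_CN01_def)
  have Xm[measurable]: "X \<in> borel_measurable M" and Ym[measurable]: "Y \<in> borel_measurable M"
    using distributed_measurable[OF Xd] distributed_measurable[OF Yd] by auto
  have dX: "distr M borel X = D"
  proof -
    have "distr M borel X = distr M lborel X" by (rule distr_cong) auto
    then show ?thesis using distributed_distr_eq_density[OF Xd] by (simp add: D_def)
  qed
  have dY: "distr M borel Y = D"
  proof -
    have "distr M borel Y = distr M lborel Y" by (rule distr_cong) auto
    then show ?thesis using distributed_distr_eq_density[OF Yd] by (simp add: D_def)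
  qed
  interpret D: prob_space D unfolding dX[symmetric] by (rule prob_space_distr) simp
  have pair: "distr M (borel \<Otimes>\<^sub>M borel) (\<lambda>\<omega>. (Y \<omega>, X \<omega>)) = D \<Otimes>\<^sub>M D"
    using ind unfolding indep_var_distribution_eq dX dY by simp
  define S where "S = {(w::complex, z::complex). q - 1 + q*e*(cmod w)\<^sup>2 \<le> a*(cmod z)\<^sup>2}"
  have S[measurable]: "S \<in> sets (borel \<Otimes>\<^sub>M borel)"
  proof -
    have "S = {x \<in> space (borel \<Otimes>\<^sub>M borel). q - 1 + q*e*(cmod (fst x))\<^sup>2 \<le> a*(cmod (snd x))\<^sup>2}"
      by (auto simp: S_def space_pair_measure)
    also have "\<dots> \<in> sets (borel \<Otimes>\<^sub>M borel)" by measurable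
    finally show ?thesis .
  qed
  have "emeasure M {\<omega> \<in> space M. q - 1 + q*e*(cmod (Y \<omega>))\<^sup>2 \<le> a*(cmod (X \<omega>))\<^sup>2}
      = emeasure (distr M (borel \<Otimes>\<^sub>M borel) (\<lambda>\<omega>. (Y \<omega>, X \<omega>))) S"
    by (subst emeasure_distr[OF _ S]) (auto simp: S_def intro!: arg_cong[where f="emeasure M"])
  also have "\<dots> = emeasure (D \<Otimes>\<^sub>M D) S" by (simp add: pair)
  also have "\<dots> = (\<integral>\<^sup>+w. emeasure D (Pair w -` S) \<partial>D)"
    by (rule D.emeasure_pair_measure_alt) (simp add: D_def)
  also have "\<dots> = (\<integral>\<^sup>+w. ennreal (exp ((1 - q - q*e*(cmod w)\<^sup>2) / a)) \<partial>D)"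
  proof (rule nn_integral_cong)
    fix w :: complex
    define k where "k = q - 1 + q*e*(cmod w)\<^sup>2"
    have k: "k \<ge> 0" using q e unfolding k_def by simp
    have "emeasure D (Pair w -` S) = (\<integral>\<^sup>+z. CN01_density z * indicator (Pair w -` S) z \<partial>lborel)"
      unfolding D_def by (subst emeasure_density) (auto simp: D_def CN01_density_def)
    also have "\<dots> = (\<integral>\<^sup>+z. (\<lambda>s. ennreal (exp (-s) / pi) * indicator {s. k \<le> a * s} s) ((cmod z)\<^sup>2) \<partial>lborel)"
      by (rule nn_integral_cong) (auto simp: CN01_density_def S_def k_def split: split_indicator)
    also have "\<dots> = (\<integral>\<^sup>+s. ennreal pi * indicator {0..} s * (ennreal (exp (-s) / pi) * indicator {s. k \<le> a * s} s) \<partial>lborel)"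
      by (rule radial) measurable
    also have "\<dots> = (\<integral>\<^sup>+s. ennreal (1 * exp (- 1 * s)) * indicator {k/a..} s \<partial>lborel)"
    proof (rule nn_integral_cong)
      fix s :: real
      have iff: "k \<le> a * s \<longleftrightarrow> k / a \<le> s" using a by (simp add: field_simps)
      have "0 \<le> k / a" using k a by simp
      then show "ennreal pi * indicator {0..} s * (ennreal (exp (-s) / pi) * indicator {s. k \<le> a * s} s)
          = ennreal (1 * exp (- 1 * s)) * indicator {k/a..} s"
        using iff by (auto simp: indicator_def ennreal_mult'[symmetric])
    qed
    also have "\<dots> = ennreal (exp (- (k / a)))"
      by (subst exp_integral) auto
    also have "- (k / a) = (1 - q - q*e*(cmod w)\<^sup>2) / a"
      using a by (simp add: k_def field_simps)
    finally show "emeasure D (Pair w -` S) = ennreal (exp ((1 - q - q*e*(cmod w)\<^sup>2) / a))" .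
  qed
  also have "\<dots> = (\<integral>\<^sup>+w. CN01_density w * ennreal (exp ((1 - q - q*e*(cmod w)\<^sup>2) / a)) \<partial>lborel)"
    unfolding D_def by (subst nn_integral_density) (auto simp: CN01_density_def)
  also have "\<dots> = (\<integral>\<^sup>+w. (\<lambda>s. ennreal (exp (-s) / pi) * ennreal (exp ((1 - q - q * e * s) / a))) ((cmod w)\<^sup>2) \<partial>lborel)"
    by (simp add: CN01_density_def)
  also have "\<dots> = (\<integral>\<^sup>+s. ennreal pi * indicator {0..} s * (ennreal (exp (-s) / pi) * ennreal (exp ((1 - q - q * e * s) / a))) \<partial>lborel)"
    by (rule radial) measurable
  also have "\<dots> = (\<integral>\<^sup>+s. ennreal (exp (-(q-1)/a) * exp (- (1 + q*e/a) * s)) * indicator {0..} s \<partial>lborel)"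
  proof (rule nn_integral_cong)
    fix s :: real
    have "exp (-s) / pi * exp ((1 - q - q * e * s) / a) * pi = exp (-(q-1)/a) * exp (- (1 + q*e/a) * s)"
      using a by (simp add: field_simps flip: exp_add)
    then show "ennreal pi * indicator {0..} s * (ennreal (exp (-s) / pi) * ennreal (exp ((1 - q - q * e * s) / a)))
       = ennreal (exp (-(q-1)/a) * exp (- (1 + q*e/a) * s)) * indicator {0..} s"
      by (auto simp: indicator_def ennreal_mult'[symmetric] ennreal_mult[symmetric] mult.commute)
  qed
  also have "\<dots> = ennreal (exp (-(q-1)/a) * exp (- (1 + q*e/a) * 0) / (1 + q*e/a))"
  proof (rule exp_integral)
    have "0 \<le> q * e / a" using a e q by simp
    then show "0 < 1 + q * e / a" by linarith
  qed simp
  finally show ?thesis by simp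
qed

definition G :: "real \<Rightarrow> real \<Rightarrow> real \<Rightarrow> complex \<Rightarrow> complex \<Rightarrow> bool" where
  "G q e a x y \<longleftrightarrow> q - 1 + q * e * (cmod y)\<^sup>2 \<le> a * (cmod x)\<^sup>2"

lemma pair_indep:
  assumes P: "prob_space M" and ind: "prob_space.indep_vars M (\<lambda>_. borel) Xs I"
    and "i \<in> I" "j \<in> I" "i \<noteq> j"
  shows "prob_space.indep_var M borel (Xs i) borel (Xs j)"
proof -
  interpret prob_space M by (rule P)
  have "indep_var (Pi\<^sub>M {i} (\<lambda>_. borel)) (\<lambda>\<omega>. restrict (\<lambda>n. Xs n \<omega>) {i})
                  (Pi\<^sub>M {j} (\<lambda>_. borel)) (\<lambda>\<omega>. restrict (\<lambda>n. Xs n \<omega>) {j})"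
    by (rule indep_var_restrict[OF ind]) (use assms in auto)
  then have "indep_var borel ((\<lambda>f. f i) \<circ> (\<lambda>\<omega>. restrict (\<lambda>n. Xs n \<omega>) {i}))
                       borel ((\<lambda>f. f j) \<circ> (\<lambda>\<omega>. restrict (\<lambda>n. Xs n \<omega>) {j}))"
    by (rule indep_var_compose) measurable
  moreover have "(\<lambda>f. f i) \<circ> (\<lambda>\<omega>. restrict (\<lambda>n. Xs n \<omega>) {i}) = Xs i"
    "(\<lambda>f. f j) \<circ> (\<lambda>\<omega>. restrict (\<lambda>n. Xs n \<omega>) {j}) = Xs j" by (auto simp: fun_eq_iff)
  ultimately show ?thesis by simp
qed

lemma ev_indep:
  assumes P: "prob_space M" and ind: "prob_space.indep_vars M (\<lambda>_. borel) Xs I"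
    and "{i, j} \<subseteq> I" "{k, l} \<subseteq> I" "{i, j} \<inter> {k, l} = {}"
  shows "measure M {\<omega> \<in> space M. G q e a1 (Xs i \<omega>) (Xs j \<omega>) \<and> G q e a2 (Xs k \<omega>) (Xs l \<omega>)}
       = measure M {\<omega> \<in> space M. G q e a1 (Xs i \<omega>) (Xs j \<omega>)} * measure M {\<omega> \<in> space M. G q e a2 (Xs k \<omega>) (Xs l \<omega>)}"
proof -
  interpret prob_space M by (rule P)
  have ind2: "indep_var (Pi\<^sub>M {i, j} (\<lambda>_. borel)) (\<lambda>\<omega>. restrict (\<lambda>n. Xs n \<omega>) {i, j})
                  (Pi\<^sub>M {k, l} (\<lambda>_. borel)) (\<lambda>\<omega>. restrict (\<lambda>n. Xs n \<omega>) {k, l})"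
    by (rule indep_var_restrict[OF ind]) (use assms in auto)
  define A where "A = {f \<in> space (Pi\<^sub>M {i, j} (\<lambda>_. borel)). G q e a1 (f i) (f j)}"
  define B where "B = {f \<in> space (Pi\<^sub>M {k, l} (\<lambda>_. borel)). G q e a2 (f k) (f l)}"
  have A: "A \<in> sets (Pi\<^sub>M {i, j} (\<lambda>_. borel :: complex measure))" unfolding A_def G_def by measurable
  have B: "B \<in> sets (Pi\<^sub>M {k, l} (\<lambda>_. borel :: complex measure))" unfolding B_def G_def by measurable
  note * = indep_varD[OF ind2 A B]
  have e1: "(\<lambda>x. (restrict (\<lambda>n. Xs n x) {i, j}, restrict (\<lambda>n. Xs n x) {k, l})) -` (A \<times> B) \<inter> space M
     = {\<omega> \<in> space M. G q e a1 (Xs i \<omega>) (Xs j \<omega>) \<and> G q e a2 (Xs k \<omega>) (Xs l \<omega>)}"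
    by (auto simp: A_def B_def space_PiM)
  have e2: "(\<lambda>x. restrict (\<lambda>n. Xs n x) {i, j}) -` A \<inter> space M = {\<omega> \<in> space M. G q e a1 (Xs i \<omega>) (Xs j \<omega>)}"
    by (auto simp: A_def space_PiM)
  have e3: "(\<lambda>x. restrict (\<lambda>n. Xs n x) {k, l}) -` B \<inter> space M = {\<omega> \<in> space M. G q e a2 (Xs k \<omega>) (Xs l \<omega>)}"
    by (auto simp: B_def space_PiM)
  show ?thesis using * unfolding e1 e2 e3 .
qed

lemma hop_ge:
  assumes "gM > 0" "gE > 0"
  shows "R \<le> hop_rate gM gE m w \<longleftrightarrow> G (2 powr R) gE gM m w"
proof -
  have N: "1 + gM * (cmod m)\<^sup>2 > 0" and Dn: "1 + gE * (cmod w)\<^sup>2 > 0"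
    using assms by (simp_all add: add_pos_nonneg)
  have "R \<le> hop_rate gM gE m w \<longleftrightarrow> 2 powr R \<le> (1 + gM * (cmod m)\<^sup>2) / (1 + gE * (cmod w)\<^sup>2)"
    unfolding hop_rate_def using N Dn by (intro le_log_iff) auto
  also have "\<dots> \<longleftrightarrow> 2 powr R * (1 + gE * (cmod w)\<^sup>2) \<le> 1 + gM * (cmod m)\<^sup>2"
    using Dn by (simp add: pos_le_divide_eq)
  also have "\<dots> \<longleftrightarrow> G (2 powr R) gE gM m w"
    unfolding G_def by (simp add: algebra_simps)
  finally show ?thesis .
qed

theorem theorem7:
  fixes M :: "'a measure"
    and hSR hRD hSE hRE :: "'a \<Rightarrow> complex"
    and gR gD gE R :: real
  assumes "prob_space M"
    and "gR > 0" and "gD > 0" and "gE > 0" and "R > 0"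
    and "is_CN01 M hSR" and "is_CN01 M hRD" and "is_CN01 M hSE" and "is_CN01 M hRE"
    and "prob_space.indep_vars M (\<lambda>_. borel) (\<lambda>i. [hSR, hRD, hSE, hRE] ! i) {0..<4::nat}"
  shows "measure M {\<omega> \<in> space M.
             secrecy_capacity3 gR gD gE (hSR \<omega>) (hRD \<omega>) (hSE \<omega>) (hRE \<omega>) < R}
         = 1 - exp (- (2 powr R - 1) / gD - (2 powr R - 1) / gR)
               * (1 / (1 + (2 powr R / gD) * gE))
               * (1 / (1 + (2 powr R / gR) * gE))"
proof -
  note P = assms(1) and ind = assms(10)
  interpret prob_space M by (rule P)
  define q where "q = 2 powr R"
  have q: "q \<ge> 1" unfolding q_def using assms(5) by (intro ge_one_powr_ge_zero) auto
  have meas: "h \<in> borel_measurable M" if "is_CN01 M h" for h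
    using distributed_measurable[of M lborel h] that by (auto simp: is_CN01_def)
  have [measurable]: "hSR \<in> borel_measurable M" "hRD \<in> borel_measurable M"
    "hSE \<in> borel_measurable M" "hRE \<in> borel_measurable M" using meas assms(6-9) by auto
  have one: "measure M {\<omega> \<in> space M. G q gE gM (X \<omega>) (Y \<omega>)} = exp (-(q-1)/gM) / (1 + q*gE/gM)"
    if "is_CN01 M X" "is_CN01 M Y" "indep_var borel Y borel X" "gM > 0" for X Y gM
  proof -
    have "emeasure M {\<omega> \<in> space M. G q gE gM (X \<omega>) (Y \<omega>)} = ennreal (exp (-(q-1)/gM) / (1 + q*gE/gM))"
      unfolding G_def using key[OF P that(1,2,3,4) _ q, of gE] assms(4) by simp
    moreover have "0 \<le> exp (-(q-1)/gM) / (1 + q*gE/gM)"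
      using that(4) q assms(4) by (simp add: add_nonneg_nonneg)
    ultimately show ?thesis by (simp add: emeasure_eq_measure)
  qed
  have i20: "indep_var borel hSE borel hSR" using pair_indep[OF P ind, of 2 0] by simp
  have i31: "indep_var borel hRE borel hRD" using pair_indep[OF P ind, of 3 1] by simp
  have p1: "measure M {\<omega> \<in> space M. G q gE gR (hSR \<omega>) (hSE \<omega>)} = exp (-(q-1)/gR) / (1 + q*gE/gR)"
    by (rule one[OF assms(6,8) i20 assms(2)])
  have p2: "measure M {\<omega> \<in> space M. G q gE gD (hRD \<omega>) (hRE \<omega>)} = exp (-(q-1)/gD) / (1 + q*gE/gD)"
    by (rule one[OF assms(7,9) i31 assms(3)])
  have p12: "measure M {\<omega> \<in> space M. G q gE gR (hSR \<omega>) (hSE \<omega>) \<and> G q gE gD (hRD \<omega>) (hRE \<omega>)}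
     = measure M {\<omega> \<in> space M. G q gE gR (hSR \<omega>) (hSE \<omega>)} * measure M {\<omega> \<in> space M. G q gE gD (hRD \<omega>) (hRE \<omega>)}"
    using ev_indep[OF P ind, of 0 2 1 3 q gE gR gD] by simp
  have set: "{\<omega> \<in> space M. secrecy_capacity3 gR gD gE (hSR \<omega>) (hRD \<omega>) (hSE \<omega>) (hRE \<omega>) < R}
     = space M - {\<omega> \<in> space M. G q gE gR (hSR \<omega>) (hSE \<omega>) \<and> G q gE gD (hRD \<omega>) (hRE \<omega>)}"
    using assms(2-5) by (auto simp: secrecy_capacity3_def q_def hop_ge[symmetric])
  have ev: "{\<omega> \<in> space M. G q gE gR (hSR \<omega>) (hSE \<omega>) \<and> G q gE gD (hRD \<omega>) (hRE \<omega>)} \<in> events"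
    unfolding G_def by measurable
  have "measure M {\<omega> \<in> space M. secrecy_capacity3 gR gD gE (hSR \<omega>) (hRD \<omega>) (hSE \<omega>) (hRE \<omega>) < R}
     = 1 - exp (-(q-1)/gR) / (1 + q*gE/gR) * (exp (-(q-1)/gD) / (1 + q*gE/gD))"
    unfolding set prob_compl[OF ev] p12 p1 p2 by simp
  also have "\<dots> = 1 - exp (- (q - 1) / gD - (q - 1) / gR) * (1 / (1 + (q / gD) * gE)) * (1 / (1 + (q / gR) * gE))"
  proof -
    have "exp (- (q - 1) / gD - (q - 1) / gR) = exp (-(q-1)/gD) * exp (-(q-1)/gR)"
    proof -
      have "- (q - 1) / gD - (q - 1) / gR = - (q - 1) / gD + (- (q - 1) / gR)"
        using assms(2,3) by (simp add: field_simps)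
      then show ?thesis by (metis exp_add)
    qed
    then show ?thesis by (simp add: mult_ac)
  qed
  finally show ?thesis unfolding q_def .
qed

end
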